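(* Let $m,n$ be positive integers and let $\tau=1^m\text{-}1^m\text{-}\cdots\text{-}1^m$ be the pattern consisting of $n$ runs of $m$ ones separated by $n-1$ dashes. Let $H(x,u,v)=\sum_{\phi}x^{\mathrm{len}(\phi)}u^{\mathrm{parts}(\phi)}v^{\mathrm{fst}(\phi)}$, the sum over all factorizations $\phi$ on the one-letter alphabet $\{1\}$ (including the empty factorization) that avoid $\tau$. Then \[ H(x,u,v)=1+\left[\frac{1-x}{(1-vx)(1-x-ux)}\right]\left[u(vx-(vx)^{mn})+\frac{u^2x^m\left((1-vx)(z-(vx)^m)z^{n-1}-(1-(vx)^m)(z^n-(vx)^{mn})\right)}{(z-(vx)^m)(1-x-u(x-x^m))}\right], \] where \[ z=x^m+\frac{ux^m(1-x^m)}{1-x-u(x-x^m)}. \]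
   Context: A factorization on $\{1\}$ is an ordered list $(\phi_1)\cdots(\phi_k)$ of nonempty words $\phi_j=1^{c_j}$; $\mathrm{parts}(\phi)=k$, $\mathrm{len}(\phi)=c_1+\cdots+c_k$, and $\mathrm{fst}(\phi)=c_1$ is the length of the first part ($\mathrm{fst}(\emptyset)=0$). A factorization $\phi$ contains $\tau$ if the word obtained from $\phi$ by inserting a single letter $0$ between each pair of adjacent parts contains $\tau$ by an occurrence not using the letter $0$; here a word contains $1^{m}\text{-}\cdots\text{-}1^{m}$ ($n$ runs) if it has $nm$ occurrences of the same letter at positions $i_1<\cdots<i_{nm}$ such that positions within each consecutive block of $m$ of them are consecutive in the word. Equivalently, $\phi$ contains $\tau$ iff one can choose $n$ disjoint runs of $m$ consecutive ones, each lying within a single part. Otherwise $\phi$ avoids $\tau$. *)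

theory Defs
  imports "HOL-Analysis.Analysis"
begin

text \<open>A factorization on the one-letter alphabet {1} is represented by the list
  [c_1, ..., c_k] of the lengths of its parts (all positive); the empty list is the
  empty factorization.\<close>

definition is_factorization :: "nat list \<Rightarrow> bool" where
  "is_factorization cs \<longleftrightarrow> (\<forall>c\<in>set cs. 0 < c)"

definition parts :: "nat list \<Rightarrow> nat" where
  "parts cs = length cs"

definition len :: "nat list \<Rightarrow> nat" where
  "len cs = sum_list cs"

definition fst_part :: "nat list \<Rightarrow> nat" where
  "fst_part cs = (if cs = [] then 0 else hd cs)"

text \<open>A run of m consecutive ones inside a single part is given by a pair (j, s):
  part index j (0-based) and starting offset s (0-based) within part j, occupying
  positions s, ..., s+m-1 of that part.  The factorization contains the pattern
  1^m-1^m-...-1^m (n runs) iff one can choose n pairwise disjoint such runs.\<close>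

definition contains_runs :: "nat \<Rightarrow> nat \<Rightarrow> nat list \<Rightarrow> bool" where
  "contains_runs m n cs \<longleftrightarrow>
     (\<exists>R :: (nat \<times> nat) set. finite R \<and> card R = n \<and>
        (\<forall>(j, s)\<in>R. j < length cs \<and> s + m \<le> cs ! j) \<and>
        (\<forall>(j, s)\<in>R. \<forall>(j', s')\<in>R. (j, s) \<noteq> (j', s') \<longrightarrow>
            j \<noteq> j' \<or> s + m \<le> s' \<or> s' + m \<le> s))"

definition avoids_runs :: "nat \<Rightarrow> nat \<Rightarrow> nat list \<Rightarrow> bool" where
  "avoids_runs m n cs \<longleftrightarrow> \<not> contains_runs m n cs"

end

theory Submission
  imports Defs
begin


definition kk :: "nat \<Rightarrow> nat list \<Rightarrow> nat" where
  "kk m cs = sum_list (map (\<lambda>c. c div m) cs)"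

lemma kk_nth: "kk m cs = (\<Sum>j<length cs. cs ! j div m)"
  unfolding kk_def by (simp add: sum_list_sum_nth atLeast0LessThan)

lemma H1: "i < c div m \<Longrightarrow> i*m + m \<le> (c::nat)"
  by (metis add.commute div_times_less_eq_dividend le_trans less_eq_Suc_le mult_Suc mult_le_mono1)

lemma H2: "i < i' \<Longrightarrow> i*m + m \<le> i'*(m::nat)"
  by (metis Suc_leI add.commute mult_Suc mult_le_mono1)

lemma contains_if:
  assumes m: "0 < m" and le: "n \<le> kk m cs"
  shows "contains_runs m n cs"
proof -
  define Rall where "Rall = (\<Union>j<length cs. (\<lambda>i. (j, i*m)) ` {..<cs!j div m})"
  have fin: "finite Rall" unfolding Rall_def by auto
  have "card Rall = (\<Sum>j<length cs. card ((\<lambda>i. (j, i*m)) ` {..<cs!j div m}))"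
    unfolding Rall_def by (rule card_UN_disjoint) auto
  also have "\<dots> = (\<Sum>j<length cs. cs!j div m)"
    by (rule sum.cong) (auto simp: card_image inj_on_def m)
  also have "\<dots> = kk m cs" by (simp add: kk_nth)
  finally have cardR: "card Rall = kk m cs" .
  obtain R where R: "R \<subseteq> Rall" "card R = n" "finite R"
    using obtain_subset_with_card_n[of n Rall] le cardR by metis
  have key: "\<And>p. p \<in> R \<Longrightarrow> \<exists>j i. p = (j, i*m) \<and> j < length cs \<and> i < cs!j div m"
    using R(1) unfolding Rall_def by blast
  have A: "\<forall>(j, s)\<in>R. j < length cs \<and> s + m \<le> cs ! j"
  proof (intro ballI, clarify)
    fix j s assume "(j, s) \<in> R"
    then show "j < length cs \<and> s + m \<le> cs ! j" using key H1 by blast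
  qed
  have B': "\<forall>p\<in>R. \<forall>p'\<in>R. p \<noteq> p' \<longrightarrow> fst p \<noteq> fst p' \<or> snd p + m \<le> snd p' \<or> snd p' + m \<le> snd p"
  proof (intro ballI impI)
    fix p p' assume a: "p \<in> R" "p' \<in> R" "p \<noteq> p'"
    obtain j i where i: "p = (j, i*m)" using key[OF a(1)] by blast
    obtain j' i' where i': "p' = (j', i'*m)" using key[OF a(2)] by blast
    show "fst p \<noteq> fst p' \<or> snd p + m \<le> snd p' \<or> snd p' + m \<le> snd p"
    proof (cases "j = j'")
      case True
      then have "i \<noteq> i'" using a i i' by auto
      then have "i < i' \<or> i' < i" by auto
      then show ?thesis using H2[of i i' m] H2[of i' i m] i i' by auto
    qed (use i i' in auto)
  qed
  have B: "\<forall>(j, s)\<in>R. \<forall>(j', s')\<in>R. (j, s) \<noteq> (j', s') \<longrightarrow>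
            j \<noteq> j' \<or> s + m \<le> s' \<or> s' + m \<le> s"
    using B' by fastforce
  show ?thesis unfolding contains_runs_def
    apply (rule exI[of _ R]) using A B R(2,3) by (intro conjI)
qed

lemma contains_only_if:
  assumes m: "0 < m" and c: "contains_runs m n cs"
  shows "n \<le> kk m cs"
proof -
  obtain R where fin: "finite R" and card: "card R = n"
    and inb: "\<forall>(j, s)\<in>R. j < length cs \<and> s + m \<le> cs ! j"
    and dis: "\<forall>(j, s)\<in>R. \<forall>(j', s')\<in>R. (j, s) \<noteq> (j', s') \<longrightarrow> j \<noteq> j' \<or> s + m \<le> s' \<or> s' + m \<le> s"
    using c unfolding contains_runs_def by blast
  define Rj where "Rj j = {s. (j, s) \<in> R}" for j
  have RU: "R = (\<Union>j<length cs. Pair j ` Rj j)" using inb unfolding Rj_def by auto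
  have finRj: "finite (Rj j)" for j
  proof -
    have "Rj j \<subseteq> snd ` R" unfolding Rj_def by force
    then show ?thesis using fin finite_subset by blast
  qed
  have "card R = (\<Sum>j<length cs. card (Pair j ` Rj j))"
    by (subst RU, rule card_UN_disjoint) (auto simp: finRj)
  also have "\<dots> = (\<Sum>j<length cs. card (Rj j))" by (simp add: card_image inj_on_def)
  also have "\<dots> \<le> (\<Sum>j<length cs. cs!j div m)"
  proof (rule sum_mono)
    fix j assume "j \<in> {..<length cs}"
    have sub: "(\<Union>s\<in>Rj j. {s..<s+m}) \<subseteq> {..<cs!j}" using inb unfolding Rj_def by auto
    have "card (\<Union>s\<in>Rj j. {s..<s+m}) = (\<Sum>s\<in>Rj j. card {s..<s+m})"
    proof (rule card_UN_disjoint)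
      show "\<forall>i\<in>Rj j. \<forall>ja\<in>Rj j. i \<noteq> ja \<longrightarrow> {i..<i + m} \<inter> {ja..<ja + m} = {}"
      proof (intro ballI impI)
        fix a b assume "a \<in> Rj j" "b \<in> Rj j" "a \<noteq> b"
        then have "a + m \<le> b \<or> b + m \<le> a" using dis unfolding Rj_def by fastforce
        then show "{a..<a + m} \<inter> {b..<b + m} = {}" by auto
      qed
    qed (auto simp: finRj)
    also have "\<dots> = card (Rj j) * m" by simp
    finally have "card (Rj j) * m \<le> cs ! j"
      using card_mono[OF _ sub] by (metis card_lessThan finite_lessThan)
    then show "card (Rj j) \<le> cs!j div m" by (simp add: m less_eq_div_iff_mult_less_eq)
  qed
  also have "\<dots> = kk m cs" by (simp add: kk_nth)
  finally show ?thesis using card by simp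
qed

lemma avoids_iff: "0 < m \<Longrightarrow> avoids_runs m n cs \<longleftrightarrow> kk m cs < n"
  unfolding avoids_runs_def using contains_if contains_only_if by (meson not_le)


definition FL :: "nat \<Rightarrow> nat list set" where
  "FL L = {cs. is_factorization cs \<and> len cs \<le> L}"

lemma length_le_len: "is_factorization cs \<Longrightarrow> length cs \<le> len cs"
  by (induction cs) (auto simp: is_factorization_def len_def)

lemma FL_finite: "finite (FL L)"
proof -
  have "FL L \<subseteq> {xs. set xs \<subseteq> {..L} \<and> length xs \<le> L}"
  proof
    fix cs assume "cs \<in> FL L"
    then have f: "is_factorization cs" and l: "len cs \<le> L" unfolding FL_def by auto
    have "set cs \<subseteq> {..L}" using l member_le_sum_list[of _ cs] unfolding len_def by fastforce
    moreover have "length cs \<le> L" using length_le_len[OF f] l by simp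
    ultimately show "cs \<in> {xs. set xs \<subseteq> {..L} \<and> length xs \<le> L}" by simp
  qed
  then show ?thesis using finite_lists_length_le[of "{..L}" L] finite_subset by blast
qed

lemma FL_decomp: "FL L = insert [] (\<Union>c\<in>{1..L}. Cons c ` FL (L - c))"
proof (rule set_eqI)
  fix cs show "cs \<in> FL L \<longleftrightarrow> cs \<in> insert [] (\<Union>c\<in>{1..L}. Cons c ` FL (L - c))"
  proof (cases cs)
    case Nil then show ?thesis by (simp add: FL_def is_factorization_def len_def)
  next
    case (Cons c r)
    then show ?thesis by (fastforce simp: FL_def is_factorization_def len_def)
  qed
qed

lemma geo1: "(\<Sum>c\<in>{1..L}. (y::real)^c) * (1 - y) = y - y^(Suc L)"
proof (induction L)
  case (Suc L)
  have "(\<Sum>c\<in>{1..Suc L}. y^c) = (\<Sum>c\<in>{1..L}. y^c) + y^Suc L" by (simp add: sum.cl_ivl_Suc)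
  then have "(\<Sum>c\<in>{1..Suc L}. y^c) * (1 - y) = (\<Sum>c\<in>{1..L}. y^c) * (1 - y) + y^Suc L * (1 - y)"
    by (simp add: algebra_simps)
  also have "\<dots> = y - y^Suc L + y^Suc L * (1 - y)" by (subst Suc.IH) (rule refl)
  also have "\<dots> = y - y^Suc (Suc L)" by (simp add: algebra_simps)
  finally show ?case .
qed simp

lemma FL_bound:
  fixes y :: real assumes y0: "0 \<le> y" and y1: "y \<le> 1/4"
  shows "(\<Sum>cs\<in>FL L. y ^ len cs) \<le> 2"
proof (induction L rule: less_induct)
  case (less L)
  have "(\<Sum>cs\<in>FL L. y ^ len cs) = 1 + (\<Sum>cs\<in>(\<Union>c\<in>{1..L}. Cons c ` FL (L - c)). y ^ len cs)"
    by (subst FL_decomp, subst sum.insert) (auto simp: FL_finite len_def)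
  also have "(\<Sum>cs\<in>(\<Union>c\<in>{1..L}. Cons c ` FL (L - c)). y ^ len cs)
      = (\<Sum>c\<in>{1..L}. (\<Sum>cs\<in>Cons c ` FL (L - c). y ^ len cs))"
    by (rule sum.UNION_disjoint) (auto simp: FL_finite)
  also have "\<dots> = (\<Sum>c\<in>{1..L}. y^c * (\<Sum>cs\<in>FL (L - c). y ^ len cs))"
    by (rule sum.cong) (auto simp: sum.reindex sum_distrib_left len_def power_add)
  also have "\<dots> \<le> (\<Sum>c\<in>{1..L}. y^c * 2)"
    by (rule sum_mono) (auto intro!: mult_left_mono less simp: y0)
  also have "\<dots> = 2 * (\<Sum>c\<in>{1..L}. y^c)" by (simp add: sum_distrib_left mult.commute)
  also have "(\<Sum>c\<in>{1..L}. y^c) \<le> 1/3"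
  proof -
    have "(\<Sum>c\<in>{1..L}. y^c) * (1 - y) \<le> y" using geo1[where L=L and y=y] y0 by simp
    moreover have "(\<Sum>c\<in>{1..L}. y^c) * (3/4) \<le> (\<Sum>c\<in>{1..L}. y^c) * (1 - y)"
      using y1 by (intro mult_left_mono) (auto intro!: sum_nonneg simp: y0)
    ultimately show ?thesis using y1 by linarith
  qed
  finally show ?case by simp
qed

lemma summ_y:
  fixes y :: real assumes y0: "0 \<le> y" and y1: "y \<le> 1/4"
  shows "(\<lambda>cs. y ^ len cs) summable_on {cs. is_factorization cs}"
proof (rule nonneg_bdd_above_summable_on)
  show "bdd_above (sum (\<lambda>cs. y ^ len cs) ` {F. F \<subseteq> {cs. is_factorization cs} \<and> finite F})"
  proof (rule bdd_aboveI[of _ 2], clarify)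
    fix F assume F: "F \<subseteq> {cs. is_factorization cs}" "finite F"
    define L where "L = (\<Sum>cs\<in>F. len cs)"
    have "F \<subseteq> FL L" unfolding FL_def L_def using F member_le_sum[of _ F len] by auto
    then have "(\<Sum>cs\<in>F. y ^ len cs) \<le> (\<Sum>cs\<in>FL L. y ^ len cs)"
      by (intro sum_mono2) (auto simp: FL_finite y0)
    then show "(\<Sum>cs\<in>F. y ^ len cs) \<le> 2" using FL_bound[OF y0 y1, of L] by simp
  qed
qed (use y0 in auto)

lemma summ_w:
  fixes x u v :: real
  assumes "\<bar>x\<bar> \<le> 1/4" "\<bar>u\<bar> \<le> 1" "\<bar>v\<bar> \<le> 1"
  shows "(\<lambda>cs. x ^ len cs * u ^ parts cs * v ^ fst_part cs) summable_on {cs. is_factorization cs}"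
proof (rule abs_summable_summable)
  show "(\<lambda>cs. norm (x ^ len cs * u ^ parts cs * v ^ fst_part cs)) summable_on {cs. is_factorization cs}"
  proof (rule summable_on_comparison_test[OF summ_y[of "\<bar>x\<bar>"]])
    fix cs
    have a: "\<bar>u\<bar> ^ parts cs \<le> 1" "\<bar>v\<bar> ^ fst_part cs \<le> 1" using assms by (auto intro: power_le_one)
    have "\<bar>x ^ len cs * u ^ parts cs * v ^ fst_part cs\<bar> = \<bar>x\<bar> ^ len cs * (\<bar>u\<bar> ^ parts cs * \<bar>v\<bar> ^ fst_part cs)"
      by (simp add: abs_mult power_abs)
    also have "\<dots> \<le> \<bar>x\<bar> ^ len cs * 1"
      using a by (intro mult_left_mono) (auto simp: mult_le_one)
    finally show "norm (x ^ len cs * u ^ parts cs * v ^ fst_part cs) \<le> \<bar>x\<bar> ^ len cs" by simp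
  qed (use assms in auto)
qed


definition AA :: "nat \<Rightarrow> nat \<Rightarrow> nat list set" where
  "AA m N = {cs. is_factorization cs \<and> kk m cs < N}"

lemma AA_sub: "AA m N \<subseteq> {cs. is_factorization cs}"
  unfolding AA_def by auto

lemma AA_decomp:
  assumes m: "0 < m" and N: "0 < N"
  shows "AA m N = insert [] (\<Union>c\<in>{1..<N*m}. Cons c ` AA m (N - c div m))"
proof (rule set_eqI)
  fix cs show "cs \<in> AA m N \<longleftrightarrow> cs \<in> insert [] (\<Union>c\<in>{1..<N*m}. Cons c ` AA m (N - c div m))"
  proof (cases cs)
    case Nil then show ?thesis using N by (simp add: AA_def is_factorization_def kk_def)
  next
    case (Cons c r)
    have "cs \<in> AA m N \<longleftrightarrow> 0 < c \<and> is_factorization r \<and> c div m + kk m r < N"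
      by (simp add: Cons AA_def is_factorization_def kk_def)
    also have "\<dots> \<longleftrightarrow> c \<in> {1..<N*m} \<and> r \<in> AA m (N - c div m)"
      using div_less_iff_less_mult[OF m, of c N] by (auto simp: AA_def)
    also have "\<dots> \<longleftrightarrow> cs \<in> insert [] (\<Union>c\<in>{1..<N*m}. Cons c ` AA m (N - c div m))"
      by (auto simp: Cons)
    finally show ?thesis .
  qed
qed

lemma infsum_UN_fin:
  fixes f :: "'a \<Rightarrow> real"
  assumes fin: "finite I" and sf: "f summable_on U" and sub: "\<And>i. i\<in>I \<Longrightarrow> B i \<subseteq> U"
    and dis: "\<And>i j. i\<in>I \<Longrightarrow> j\<in>I \<Longrightarrow> i\<noteq>j \<Longrightarrow> B i \<inter> B j = {}"
  shows "infsum f (\<Union>i\<in>I. B i) = (\<Sum>i\<in>I. infsum f (B i))"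
  using fin sub dis
proof (induction I rule: finite_induct)
  case empty then show ?case by simp
next
  case (insert i I)
  have "infsum f (\<Union>j\<in>insert i I. B j) = infsum f (B i \<union> (\<Union>j\<in>I. B j))" by simp
  also have "\<dots> = infsum f (B i) + infsum f (\<Union>j\<in>I. B j)"
  proof (rule infsum_Un_disjoint)
    show "f summable_on B i" using summable_on_subset_banach[OF sf] insert.prems by auto
    show "f summable_on (\<Union>j\<in>I. B j)" by (rule summable_on_subset_banach[OF sf]) (use insert.prems in auto)
    show "B i \<inter> (\<Union>j\<in>I. B j) = {}" using insert.prems insert.hyps by fastforce
  qed
  also have "\<dots> = infsum f (B i) + (\<Sum>j\<in>I. infsum f (B j))"
    using insert.IH insert.prems by simp
  finally show ?case using insert.hyps by simp
qed

lemma infsum_AA: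
  fixes f :: "nat list \<Rightarrow> real"
  assumes m: "0 < m" and N: "0 < N" and sf: "f summable_on {cs. is_factorization cs}"
  shows "infsum f (AA m N) = f [] + (\<Sum>c\<in>{1..<N*m}. infsum (\<lambda>r. f (c # r)) (AA m (N - c div m)))"
proof -
  let ?U = "\<Union>c\<in>{1..<N*m}. Cons c ` AA m (N - c div m)"
  have sU: "f summable_on ?U"
    by (rule summable_on_subset_banach[OF sf]) (auto simp: AA_def is_factorization_def)
  have "infsum f (AA m N) = infsum f (insert [] ?U)" using AA_decomp[OF m N] by simp
  also have "\<dots> = f [] + infsum f ?U" by (rule infsum_insert[OF sU]) auto
  also have "infsum f ?U = (\<Sum>c\<in>{1..<N*m}. infsum f (Cons c ` AA m (N - c div m)))"
    by (rule infsum_UN_fin[OF _ sf]) (auto simp: AA_def is_factorization_def)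
  also have "\<dots> = (\<Sum>c\<in>{1..<N*m}. infsum (\<lambda>r. f (c # r)) (AA m (N - c div m)))"
    by (rule sum.cong) (auto simp: infsum_reindex comp_def)
  finally show ?thesis .
qed

lemma block:
  fixes t u :: real and s :: "nat \<Rightarrow> real"
  assumes m: "0 < m" and N: "0 < N"
  shows "(\<Sum>c\<in>{1..<N*m}. u * t^c * s (N - c div m))
     = u * (\<Sum>r<m. t^r) * (\<Sum>q<N. (t^m)^q * s (N - q)) - u * s N"
proof -
  have ins: "{..<N*m} = insert 0 {1..<N*m}" using m N by auto
  have "(\<Sum>c<N*m. u * t^c * s (N - c div m)) = u * s N + (\<Sum>c\<in>{1..<N*m}. u * t^c * s (N - c div m))"
    by (subst ins, subst sum.insert) auto
  moreover have "(\<Sum>c<N*m. u * t^c * s (N - c div m)) = (\<Sum>q<N. \<Sum>c\<in>{q*m..<q*m+m}. u * t^c * s (N - c div m))"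
    by (simp add: sum.nat_group)
  moreover have "\<dots> = (\<Sum>q<N. \<Sum>r<m. u * t^r * (t^m)^q * s (N - q))"
  proof (rule sum.cong[OF refl])
    fix q assume "q \<in> {..<N}"
    have "(\<Sum>c\<in>{q*m..<q*m+m}. u * t^c * s (N - c div m))
        = (\<Sum>r\<in>{0..<m}. u * t^(r + q*m) * s (N - (r + q*m) div m))"
      using sum.shift_bounds_nat_ivl[of "\<lambda>c. u * t^c * s (N - c div m)" 0 "q*m" m] by (simp add: add.commute)
    also have "\<dots> = (\<Sum>r<m. u * t^r * (t^m)^q * s (N - q))"
    proof (rule sum.cong)
      fix r assume "r \<in> {..<m}"
      then have "(r + q*m) div m = q" using m by simp
      then show "u * t^(r + q*m) * s (N - (r + q*m) div m) = u * t^r * (t^m)^q * s (N - q)"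
        by (simp add: power_add power_mult mult.commute)
    qed auto
    finally show "(\<Sum>c\<in>{q*m..<q*m+m}. u * t^c * s (N - c div m)) = (\<Sum>r<m. u * t^r * (t^m)^q * s (N - q))" .
  qed
  moreover have "\<dots> = u * (\<Sum>r<m. t^r) * (\<Sum>q<N. (t^m)^q * s (N - q))"
    by (simp add: sum_distrib_left sum_distrib_right mult_ac)
  ultimately show ?thesis by linarith
qed

lemma Rt_Suc:
  fixes s :: "nat \<Rightarrow> real"
  shows "(\<Sum>q<Suc N. (t^m)^q * s (Suc N - q)) = s (Suc N) + t^m * (\<Sum>q<N. (t^m)^q * s (N - q))"
  by (subst sum.lessThan_Suc_shift) (simp add: sum_distrib_left mult_ac del: sum.lessThan_Suc)

lemma geoG: "(\<Sum>r<m. (t::real)^r) * (1 - t) = 1 - t^m"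
proof (induction m)
  case (Suc m)
  have "(\<Sum>r<Suc m. t^r) * (1 - t) = (\<Sum>r<m. t^r) * (1 - t) + t^m * (1 - t)"
    by (simp add: algebra_simps)
  also have "\<dots> = 1 - t^m + t^m * (1 - t)" by (subst Suc.IH) (rule refl)
  also have "\<dots> = 1 - t^Suc m" by (simp add: algebra_simps)
  finally show ?case .
qed simp


lemma Rt_SucW:
  fixes s :: "nat \<Rightarrow> real"
  shows "(\<Sum>q<Suc N. W^q * s (Suc N - q)) = s (Suc N) + W * (\<Sum>q<N. W^q * s (N - q))"
  by (subst sum.lessThan_Suc_shift) (simp add: sum_distrib_left mult_ac del: sum.lessThan_Suc)

lemma s_step_alg0:
  fixes x u X sn s' Zp c q r :: real
  assumes cd: "c = 1 - x" and qd: "q = 1 - x - u*x" and rd: "r = 1 - x - u*(x - X)"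
    and x1: "c \<noteq> 0" and d1: "r \<noteq> 0" and d2: "q \<noteq> 0"
    and e: "s' * (r / c) = 1 - X + X*(1+u)* sn"
    and sn: "sn = c/q + (c/r - c/q) * Zp"
  shows "s' = c/q + (c/r - c/q) * ((X + u*X*(1-X)/r) * Zp)"
proof -
  have "s' = (1 - X + X*(1+u)* sn) * c / r"
    using e x1 d1 by (simp add: field_simps)
  also have "\<dots> = c/q + (c/r - c/q) * ((X + u*X*(1-X)/r) * Zp)"
    unfolding sn using x1 d1 d2 by (simp add: field_simps) (simp add: cd qd rd algebra_simps)
  finally show ?thesis .
qed

lemma s_step_alg:
  fixes x u X sn s' Zp :: real
  assumes x1: "1 - x \<noteq> 0" and d1: "1 - x - u*(x - X) \<noteq> 0" and d2: "1 - x - u*x \<noteq> 0"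
    and e: "s' * ((1 - x - u*(x - X)) / (1 - x)) = 1 - X + X*(1+u)* sn"
    and sn: "sn = (1-x)/(1-x-u*x) + ((1-x)/(1-x-u*(x-X)) - (1-x)/(1-x-u*x)) * Zp"
  shows "s' = (1-x)/(1-x-u*x) + ((1-x)/(1-x-u*(x-X)) - (1-x)/(1-x-u*x)) *
              ((X + u*X*(1-X)/(1-x-u*(x-X))) * Zp)"
  by (rule s_step_alg0[OF refl refl refl x1 d1 d2 e sn])

lemma s_closed:
  fixes s :: "nat \<Rightarrow> real" and x u X G :: real
  assumes eq: "\<And>N. 0 < N \<Longrightarrow> s N = 1 + u*G*(\<Sum>q<N. X^q * s (N-q)) - u * s N"
    and G: "G * (1 - x) = 1 - X" and x1: "1 - x \<noteq> 0"
    and d1: "1 - x - u*(x - X) \<noteq> 0" and d2: "1 - x - u*x \<noteq> 0"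
  shows "0 < N \<Longrightarrow> s N = (1-x)/(1-x-u*x) + ((1-x)/(1-x-u*(x-X)) - (1-x)/(1-x-u*x)) *
              (X + u*X*(1-X)/(1-x-u*(x-X)))^(N-1)"
proof (induction N)
  case 0 then show ?case by simp
next
  case (Suc N)
  have Gv: "G = (1 - X)/(1-x)" using G x1 by (simp add: field_simps)
  have k: "1 + u - u*G = (1 - x - u*(x - X)) / (1 - x)" using x1 unfolding Gv by (simp add: field_simps)
  show ?case
  proof (cases "N = 0")
    case True
    have "s 1 = 1 + u*G* s 1 - u * s 1" using eq[of 1] by simp
    then have "s 1 * (1 + u - u*G) = 1" by (simp add: algebra_simps)
    then have "s 1 * ((1 - x - u*(x - X)) / (1 - x)) = 1" using k by simp
    then have "s 1 = (1-x)/(1-x-u*(x-X))" using x1 d1 by (simp add: field_simps)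
    then show ?thesis using True by simp
  next
    case False
    let ?R = "\<lambda>N. (\<Sum>q<N. X^q * s (N-q))"
    have e1: "s (Suc N) = 1 + u*G*(s (Suc N) + X * ?R N) - u * s (Suc N)"
      using eq[of "Suc N"] Rt_SucW[of X s N] by simp
    have e2: "s N = 1 + u*G*?R N - u * s N" using eq[of N] False by simp
    have "s (Suc N) * (1 + u - u*G) = 1 - X + X*(1+u)* s N"
    proof -
      have h: "u*G*?R N = s N - 1 + u * s N" using e2 by simp
      have "u*G*(X * ?R N) = X * (u*G*?R N)" by (simp only: mult_ac)
      then have "u*G*(X * ?R N) = X * (s N - 1 + u * s N)" using h by simp
      then show ?thesis using e1 by (simp add: algebra_simps)
    qed
    then have e3: "s (Suc N) * ((1 - x - u*(x - X)) / (1 - x)) = 1 - X + X*(1+u)* s N" using k by simp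
    have IH: "s N = (1-x)/(1-x-u*x) + ((1-x)/(1-x-u*(x-X)) - (1-x)/(1-x-u*x)) *
              (X + u*X*(1-X)/(1-x-u*(x-X)))^(N-1)" using Suc.IH False by simp
    have pw: "(X + u*X*(1-X)/(1-x-u*(x-X)))^(Suc N - 1) = (X + u*X*(1-X)/(1-x-u*(x-X))) * (X + u*X*(1-X)/(1-x-u*(x-X)))^(N-1)"
      using False by (cases N) auto
    show ?thesis unfolding pw using s_step_alg[OF x1 d1 d2 e3 IH] .
  qed
qed

lemma Rt_alg:
  fixes Ps D Z B w z a b :: real
  assumes w: "w = 1 - a" and z: "z = b + 1 - a" and a: "a \<noteq> 0" and b: "b \<noteq> 0"
  shows "Ps + D * Z + w * (Ps*(1 - B)/a + D*(Z - B)/b) = Ps*(1 - w*B)/a + D*(z*Z - w*B)/b"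
  unfolding w z using a b by (simp add: field_simps)

lemma Rt_closed:
  fixes s :: "nat \<Rightarrow> real" and Ps D z w :: real
  assumes sc: "\<And>N. 0 < N \<Longrightarrow> s N = Ps + D * z^(N-1)"
    and w1: "1 - w \<noteq> 0" and zw: "z - w \<noteq> 0"
  shows "(\<Sum>q<N. w^q * s (N-q)) = Ps*(1 - w^N)/(1-w) + D*(z^N - w^N)/(z - w)"
proof (induction N)
  case 0 then show ?case by simp
next
  case (Suc N)
  have "(\<Sum>q<Suc N. w^q * s (Suc N-q)) = s (Suc N) + w * (\<Sum>q<N. w^q * s (N-q))"
    by (rule Rt_SucW)
  also have "\<dots> = Ps + D * z^N + w * (Ps*(1 - w^N)/(1-w) + D*(z^N - w^N)/(z - w))"
    using sc[of "Suc N"] Suc.IH by simp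
  also have "\<dots> = Ps*(1 - w^Suc N)/(1-w) + D*(z^Suc N - w^Suc N)/(z - w)"
    using Rt_alg[of w "1-w" z "z-w" Ps D "z^N" "w^N"] w1 zw by simp
  finally show ?case .
qed

lemma final_alg:
  fixes u c p q r a b t K z Zp W :: real
  assumes t: "t = 1 - p" and K: "K = u*(r - q)"
    and c: "c \<noteq> 0" and p: "p \<noteq> 0" and q: "q \<noteq> 0" and r: "r \<noteq> 0" and a: "a \<noteq> 0" and b: "b \<noteq> 0"
  shows "1 + u * (a / p) * (c/q*(1 - W)/a + (c/r - c/q)*(z*Zp - W)/b) - u * (c/q + (c/r - c/q) * Zp)
   = 1 + (c / (p * q)) * (u * (t - W) + K * (p * b * Zp - a * (z * Zp - W)) / (b * r))"
  unfolding t K using c p q r a b by (simp add: field_simps)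


theorem lemma5p1:
  fixes m n :: nat and x u v :: real
  assumes "1 \<le> m" and "1 \<le> n"
    and "\<bar>x\<bar> < 1/4" and "\<bar>u\<bar> \<le> 1" and "\<bar>v\<bar> \<le> 1"
    and "x ^ m + u * x ^ m * (1 - x ^ m) / (1 - x - u * (x - x ^ m)) \<noteq> (v * x) ^ m"
  shows "let z = x ^ m + u * x ^ m * (1 - x ^ m) / (1 - x - u * (x - x ^ m)) in
    ((\<lambda>cs. x ^ len cs * u ^ parts cs * v ^ fst_part cs) has_sum
      (1 + ((1 - x) / ((1 - v * x) * (1 - x - u * x))) *
         (u * (v * x - (v * x) ^ (m * n)) +
          u ^ 2 * x ^ m *
            ((1 - v * x) * (z - (v * x) ^ m) * z ^ (n - 1)
             - (1 - (v * x) ^ m) * (z ^ n - (v * x) ^ (m * n)))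
          / ((z - (v * x) ^ m) * (1 - x - u * (x - x ^ m))))))
    {cs. is_factorization cs \<and> avoids_runs m n cs}"
proof -
  have m0: "0 < m" and n0: "0 < n" using assms by auto
  define z where "z = x ^ m + u * x ^ m * (1 - x ^ m) / (1 - x - u * (x - x ^ m))"
  have ax: "\<bar>x\<bar> \<le> 1/4" using assms by simp
  have aX: "\<bar>x^m\<bar> \<le> \<bar>x\<bar>"
  proof -
    have "\<bar>x\<bar>^m \<le> \<bar>x\<bar>^1" by (rule power_decreasing) (use ax m0 in auto)
    then show ?thesis by (simp add: power_abs)
  qed
  have avx: "\<bar>v * x\<bar> \<le> \<bar>x\<bar>" using assms by (simp add: abs_mult mult_left_le_one_le)
  have aw: "\<bar>(v * x)^m\<bar> \<le> \<bar>x\<bar>"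
  proof -
    have "\<bar>v * x\<bar>^m \<le> \<bar>v * x\<bar>^1" by (rule power_decreasing) (use ax avx m0 in auto)
    then show ?thesis using avx by (simp add: power_abs)
  qed
  have aux: "\<bar>u * x\<bar> \<le> \<bar>x\<bar>" using assms by (simp add: abs_mult mult_left_le_one_le)
  have auX: "\<bar>u * (x - x^m)\<bar> \<le> 2 * \<bar>x\<bar>"
  proof -
    have "\<bar>u * (x - x^m)\<bar> \<le> \<bar>x - x^m\<bar>" using assms by (simp add: abs_mult mult_left_le_one_le)
    then show ?thesis using aX by linarith
  qed
  have x1: "1 - x \<noteq> 0" using ax by auto
  have d1: "1 - x - u*(x - x^m) \<noteq> 0" using ax auX by (auto simp: abs_if split: if_splits)
  have d2: "1 - x - u*x \<noteq> 0" using ax aux by (auto simp: abs_if split: if_splits)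
  have vx1: "1 - v * x \<noteq> 0" using ax avx by (auto simp: abs_if split: if_splits)
  have w1': "\<bar>(v * x)^m\<bar> < 1" using ax aw by linarith
  have w1: "1 - (v * x)^m \<noteq> 0" using w1' by auto
  have zw: "z - (v * x)^m \<noteq> 0" using assms(6) unfolding z_def by simp
  define w0 where "w0 cs = x ^ len cs * u ^ parts cs" for cs
  define wv where "wv cs = x ^ len cs * u ^ parts cs * v ^ fst_part cs" for cs
  have sw0: "w0 summable_on {cs. is_factorization cs}" using summ_w[of x u 1] ax assms by (simp add: w0_def[abs_def])
  have swv: "wv summable_on {cs. is_factorization cs}" using summ_w[of x u v] ax assms by (simp add: wv_def[abs_def])
  have sw0A: "w0 summable_on AA m N" for N by (rule summable_on_subset_banach[OF sw0 AA_sub])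
  define s where "s N = infsum w0 (AA m N)" for N
  have w0cons: "w0 (c # r) = u * x^c * w0 r" for c r by (simp add: w0_def len_def parts_def power_add)
  have wvcons: "wv (c # r) = u * (v * x)^c * w0 r" for c r
    by (simp add: wv_def w0_def len_def parts_def fst_part_def power_add power_mult_distrib)
  have w0nil: "w0 [] = 1" by (simp add: w0_def len_def parts_def)
  have wvnil: "wv [] = 1" by (simp add: wv_def len_def parts_def fst_part_def)
  have eqs: "s N = 1 + u * (\<Sum>r<m. x^r) * (\<Sum>q<N. (x^m)^q * s (N - q)) - u * s N" if N: "0 < N" for N
  proof -
    have "s N = w0 [] + (\<Sum>c\<in>{1..<N*m}. infsum (\<lambda>r. w0 (c # r)) (AA m (N - c div m)))"
      unfolding s_def by (rule infsum_AA[OF m0 N sw0])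
    also have "\<dots> = 1 + (\<Sum>c\<in>{1..<N*m}. u * x^c * s (N - c div m))"
      unfolding w0nil w0cons s_def by (simp add: infsum_cmult_right sw0A)
    also have "\<dots> = 1 + (u * (\<Sum>r<m. x^r) * (\<Sum>q<N. (x^m)^q * s (N - q)) - u * s N)"
      using block[OF m0 N, of u x s] by simp
    finally show ?thesis by simp
  qed
  define Ps where "Ps = (1-x)/(1-x-u*x)"
  define D where "D = (1-x)/(1-x-u*(x-x^m)) - (1-x)/(1-x-u*x)"
  have sc: "s N = Ps + D * z^(N-1)" if "0 < N" for N
    unfolding Ps_def D_def z_def
    by (rule s_closed[OF _ geoG x1 d1 d2 that]) (use eqs in simp)
  have Rt: "(\<Sum>q<n. ((v * x)^m)^q * s (n-q)) = Ps*(1 - ((v * x)^m)^n)/(1-(v * x)^m) + D*(z^n - ((v * x)^m)^n)/(z - (v * x)^m)"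
    by (rule Rt_closed[OF sc w1 zw])
  have Gv: "(\<Sum>r<m. (v * x)^r) = (1 - (v * x)^m) / (1 - v * x)"
    using geoG[where m=m and t="v * x"] vx1 by (simp add: field_simps)
  have zn: "z^n = z * z^(n-1)" using n0 by (cases n) auto
  have H: "infsum wv (AA m n) = 1 + u * ((1 - (v * x)^m) / (1 - v * x)) *
      (Ps*(1 - ((v * x)^m)^n)/(1-(v * x)^m) + D*(z * z^(n-1) - ((v * x)^m)^n)/(z - (v * x)^m))
      - u * (Ps + D * z^(n-1))"
  proof -
    have "infsum wv (AA m n) = wv [] + (\<Sum>c\<in>{1..<n*m}. infsum (\<lambda>r. wv (c # r)) (AA m (n - c div m)))"
      by (rule infsum_AA[OF m0 n0 swv])
    also have "\<dots> = 1 + (\<Sum>c\<in>{1..<n*m}. u * (v * x)^c * s (n - c div m))"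
      unfolding wvnil wvcons s_def by (simp add: infsum_cmult_right sw0A)
    also have "\<dots> = 1 + (u * (\<Sum>r<m. (v * x)^r) * (\<Sum>q<n. ((v * x)^m)^q * s (n - q)) - u * s n)"
      using block[OF m0 n0, of u "v * x" s] by simp
    also have "\<dots> = 1 + u * ((1 - (v * x)^m) / (1 - v * x)) *
      (Ps*(1 - ((v * x)^m)^n)/(1-(v * x)^m) + D*(z * z^(n-1) - ((v * x)^m)^n)/(z - (v * x)^m))
      - u * (Ps + D * z^(n-1))"
      unfolding Gv Rt sc[OF n0] zn by simp
    finally show ?thesis .
  qed
  have fin: "infsum wv (AA m n) = 1 + ((1 - x) / ((1 - v * x) * (1 - x - u * x))) *
         (u * (v * x - ((v * x) ^ m)^n) +
          u ^ 2 * x ^ m *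
            ((1 - v * x) * (z - (v * x) ^ m) * z ^ (n - 1)
             - (1 - (v * x) ^ m) * (z * z ^ (n-1) - ((v * x) ^ m)^n))
          / ((z - (v * x) ^ m) * (1 - x - u * (x - x ^ m))))"
    unfolding H Ps_def D_def
    by (rule final_alg) (use x1 d1 d2 vx1 w1 zw in \<open>auto simp: algebra_simps power2_eq_square\<close>)
  have set: "{cs. is_factorization cs \<and> avoids_runs m n cs} = AA m n"
    unfolding AA_def using avoids_iff[OF m0] by auto
  have hs: "(wv has_sum infsum wv (AA m n)) (AA m n)"
    by (rule has_sum_infsum[OF summable_on_subset_banach[OF swv AA_sub]])
  show ?thesis
    unfolding Let_def z_def[symmetric] set
    using hs unfolding fin zn power_mult wv_def by simp
qed


end
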